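(* Let $\mathfrak{B}$ be a finite subgroup of $\mathrm{SL}(2,\mathbb{C})$ closed under $B\mapsto -B$ and under transposition, and let $\mathcal{G}=\{[B]:B\in\mathfrak{B}\}$. Suppose $g=[A]\in\mathcal{G}$ has order $2$ and satisfies $[A^T]=[A]$. Then either there exists a complex matrix $M\in\mathbb{C}^{2\times 2}$ with $MM^T=I$ such that $M^TAM\in\left\{\begin{pmatrix} i&0\\0&-i\end{pmatrix},\ -\begin{pmatrix} i&0\\0&-i\end{pmatrix}\right\}$, or $g=\left[\begin{pmatrix}0&1\\-1&0\end{pmatrix}\right]$.
   Context: $[B]$ denotes the set $\{B,-B\}$; $\mathcal{G}$ is a group under $[B_1][B_2]=[B_1B_2]$ with identity $[I]$. An element $g$ has order $2$ if $g\neq[I]$ and $g^2=[I]$. A complex matrix $M$ with $MM^T=I$ is called (complex) orthogonal (this is not the unitary condition). *)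

theory Defs
  imports "HOL-Analysis.Analysis"
begin

type_synonym cmat2 = "complex^2^2"

definition pclass :: "cmat2 \<Rightarrow> cmat2 set" where
  "pclass B = {B, - B}"

definition finite_SL2_subgroup :: "cmat2 set \<Rightarrow> bool" where
  "finite_SL2_subgroup S \<longleftrightarrow>
     finite S \<and> S \<subseteq> {B. det B = 1} \<and> mat 1 \<in> S \<and>
     (\<forall>A\<in>S. \<forall>B\<in>S. A ** B \<in> S) \<and> (\<forall>A\<in>S. matrix_inv A \<in> S)"

definition diagI :: cmat2 where
  "diagI = (\<chi> i j. if i = 1 \<and> j = 1 then \<i> else if i = 2 \<and> j = 2 then - \<i> else 0)"

definition Jmat :: cmat2 where
  "Jmat = (\<chi> i j. if i = 1 \<and> j = 2 then 1 else if i = 2 \<and> j = 1 then - 1 else 0)"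

end

theory Submission
  imports Defs
begin

lemma mm2: "((X::cmat2) ** Y) $ i $ j = X$i$1 * Y$1$j + X$i$2 * Y$2$j"
  by (simp add: matrix_matrix_mult_def sum_2)

lemma eq2: "(X::cmat2) = Y \<longleftrightarrow> X$1$1 = Y$1$1 \<and> X$1$2 = Y$1$2 \<and> X$2$1 = Y$2$1 \<and> X$2$2 = Y$2$2"
  by (auto simp: vec_eq_iff forall_2)

lemma pc: "pclass X = pclass Y \<longleftrightarrow> X = Y \<or> X = - Y"
  unfolding pclass_def by (auto simp: doubleton_eq_iff)

lemma dI: "diagI $ 1 $ 1 = \<i>" "diagI $ 1 $ 2 = 0" "diagI $ 2 $ 1 = 0" "diagI $ 2 $ 2 = -\<i>"
  by (simp_all add: diagI_def)

lemma Jm: "Jmat $ 1 $ 1 = 0" "Jmat $ 1 $ 2 = 1" "Jmat $ 2 $ 1 = -1" "Jmat $ 2 $ 2 = 0"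
  by (simp_all add: Jmat_def)

lemma tp: "transpose (X::cmat2) $ i $ j = X $ j $ i"
  by (simp add: transpose_def)

lemma m1: "(mat 1::cmat2) $ 1 $ 1 = 1" "(mat 1::cmat2) $ 1 $ 2 = 0" "(mat 1::cmat2) $ 2 $ 1 = 0" "(mat 1::cmat2) $ 2 $ 2 = 1"
  by (simp_all add: mat_def)

lemma sq1: "(x::complex) * x = 1 \<Longrightarrow> x = 1 \<or> x = -1"
  by (metis power2_eq_square power2_eq_1_iff)

theorem mainTheorem7:
  fixes S :: "cmat2 set" and A :: cmat2
  assumes "finite_SL2_subgroup S"
    and "\<forall>B\<in>S. - B \<in> S"
    and "\<forall>B\<in>S. transpose B \<in> S"
    and "A \<in> S"
    and "pclass A \<noteq> pclass (mat 1)"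
    and "pclass (A ** A) = pclass (mat 1)"
    and "pclass (transpose A) = pclass A"
  shows "(\<exists>M :: cmat2. M ** transpose M = mat 1 \<and>
            (transpose M ** A ** M = diagI \<or> transpose M ** A ** M = - diagI))
         \<or> pclass A = pclass Jmat"
proof -
  define a where "a = A$1$1"
  define b where "b = A$1$2"
  define c where "c = A$2$1"
  define d where "d = A$2$2"
  have det: "a * d - b * c = 1"
    using assms(1,4) unfolding finite_SL2_subgroup_def
    by (auto simp: det_2 a_def b_def c_def d_def)
  have nI: "\<not> (a = 1 \<and> b = 0 \<and> c = 0 \<and> d = 1)" "\<not> (a = -1 \<and> b = 0 \<and> c = 0 \<and> d = -1)"
    using assms(5) unfolding pc eq2 by (auto simp: m1 a_def b_def c_def d_def)
  have sq: "(a*a + b*c = 1 \<and> a*b + b*d = 0 \<and> c*a + d*c = 0 \<and> c*b + d*d = 1) \<or>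
            (a*a + b*c = -1 \<and> a*b + b*d = 0 \<and> c*a + d*c = 0 \<and> c*b + d*d = -1)"
    using assms(6) unfolding pc eq2 by (auto simp: m1 mm2 a_def b_def c_def d_def)
  have tr: "(c = b) \<or> (a = -a \<and> c = -b \<and> d = -d)"
    using assms(7) unfolding pc eq2 by (auto simp: tp a_def b_def c_def d_def)
  show ?thesis
  proof (cases "c = b")
    case False
    with tr have "a = 0" "d = 0" "c = -b" by auto
    with det have "b * b = 1" by simp
    then have "b = 1 \<or> b = -1" by (rule sq1)
    then have "pclass A = pclass Jmat"
      unfolding pc eq2 using \<open>a = 0\<close> \<open>d = 0\<close> \<open>c = -b\<close>
      by (auto simp: Jm a_def b_def c_def d_def)
    then show ?thesis by simp
  next
    case True
    have sq2: "a*a + b*b = -1 \<and> b*(a+d) = 0 \<and> b*b + d*d = -1"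
    proof -
      have False if h: "a*a + b*c = 1" "a*b + b*d = 0" "c*b + d*d = 1"
      proof (cases "b = 0")
        case True
        with h \<open>c = b\<close> det have "a*a = 1" "d*d = 1" "a*d = 1" by auto
        then have "(a = 1 \<and> d = 1) \<or> (a = -1 \<and> d = -1)"
          using sq1 by (metis mult_cancel_left1 mult_minus_left)
        then show False using nI True \<open>c = b\<close> by auto
      next
        case False
        with h have "a + d = 0" by (metis distrib_left mult.commute mult_eq_0_iff)
        then have "d = -a" by (metis add.commute eq_neg_iff_add_eq_0)
        have e1: "a*a+b*b = 1" using h(1) \<open>c = b\<close> by simp
        have "a*d - b*c = 1" by (rule det)
        then have e2: "-(a*a+b*b) = 1" using \<open>c = b\<close> \<open>d = -a\<close> by (simp add: algebra_simps)
        from e1 e2 show False by simp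
      qed
      then show ?thesis using sq True by (auto simp: algebra_simps)
    qed
    have dA: "d = -a"
    proof (cases "b = 0")
      case True
      with sq2 det \<open>c = b\<close> have "a*a = -1" "a*d = 1" by auto
      then have "a * d + a * a = 0" by simp
      then have "a * (d + a) = 0" by (simp add: algebra_simps)
      moreover have "a \<noteq> 0" using \<open>a*a = -1\<close> by auto
      ultimately show ?thesis by (simp add: eq_neg_iff_add_eq_0 add.commute)
    next
      case False
      with sq2 have "a + d = 0" by simp
      then show ?thesis by (metis add.commute eq_neg_iff_add_eq_0)
    qed
    have ab: "a*a + b*b = -1" using sq2 by simp
    define p where "p = csqrt ((1 - \<i>*a)/2)"
    define q0 where "q0 = csqrt ((1 + \<i>*a)/2)"
    have p2: "p*p = (1 - \<i>*a)/2" unfolding p_def by (metis power2_csqrt power2_eq_square)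
    have q02: "q0*q0 = (1 + \<i>*a)/2" unfolding q0_def by (metis power2_csqrt power2_eq_square)
    have "(2*p*q0)*(2*p*q0) = (-\<i>*b)*(-\<i>*b)"
    proof -
      have "(2*p*q0)*(2*p*q0) = 4*(p*p)*(q0*q0)" by (simp add: algebra_simps)
      also have "\<dots> = 4*((1 - \<i>*a)/2)*((1 + \<i>*a)/2)" by (simp only: p2 q02)
      also have "\<dots> = (1 - \<i>*a)*(1 + \<i>*a)" by simp
      also have "\<dots> = 1 - (\<i>*\<i>)*(a*a)" by (simp add: algebra_simps)
      also have "\<dots> = 1 + a*a" by simp
      also have "\<dots> = -(b*b)"
      proof -
        have "a*a = -1 - b*b" using ab by (simp add: eq_diff_eq)
        then show ?thesis by simp
      qed
      also have "\<dots> = (-\<i>*b)*(-\<i>*b)" by (simp add: algebra_simps)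
      finally show ?thesis .
    qed
    then have "2*p*q0 = -\<i>*b \<or> 2*p*q0 = -(-\<i>*b)"
      by (metis square_eq_iff)
    then obtain q where qq: "q*q = (1 + \<i>*a)/2" "2*p*q = -\<i>*b"
      using q02 by (metis mult_minus_left mult_minus_right minus_mult_minus minus_minus)
    define M :: cmat2 where "M = (\<chi> i j. if i = 1 \<and> j = 1 then p else if i = 1 \<and> j = 2 then -q
                                  else if i = 2 \<and> j = 1 then q else p)"
    have Me: "M$1$1 = p" "M$1$2 = -q" "M$2$1 = q" "M$2$2 = p" by (simp_all add: M_def)
    have "p*p + q*q = (1 - \<i>*a)/2 + (1 + \<i>*a)/2" by (simp only: p2 qq(1))
    also have "\<dots> = 1" by (simp add: add_divide_distrib[symmetric])
    finally have pq: "p*p + q*q = 1" .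
    have "p*p - q*q = (1 - \<i>*a)/2 - (1 + \<i>*a)/2" by (simp only: p2 qq(1))
    also have "\<dots> = -\<i>*a" by (simp add: diff_divide_distrib[symmetric])
    finally have pq2: "p*p - q*q = -\<i>*a" .
    have "M ** transpose M = mat 1"
      unfolding eq2 using pq by (simp add: mm2 tp Me m1 algebra_simps)
    moreover have "transpose M ** A ** M = diagI"
    proof -
      have A: "A$1$1 = a" "A$1$2 = b" "A$2$1 = b" "A$2$2 = -a"
        using True dA by (auto simp: a_def b_def c_def d_def)
      have s: "-(\<i>*(a*a+b*b)) = \<i>" using ab by simp
      have f11: "(transpose M ** A ** M)$1$1 = a*(p*p - q*q) + b*(2*p*q)"
        by (simp add: mm2 tp Me A algebra_simps)
      have f12: "(transpose M ** A ** M)$1$2 = b*(p*p - q*q) - a*(2*p*q)"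
        by (simp add: mm2 tp Me A algebra_simps)
      have f21: "(transpose M ** A ** M)$2$1 = b*(p*p - q*q) - a*(2*p*q)"
        by (simp add: mm2 tp Me A algebra_simps)
      have f22: "(transpose M ** A ** M)$2$2 = -(a*(p*p - q*q) + b*(2*p*q))"
        by (simp add: mm2 tp Me A algebra_simps)
      have g1: "a*(p*p - q*q) + b*(2*p*q) = \<i>"
        unfolding pq2 qq(2) using s by (simp add: algebra_simps)
      have g2: "b*(p*p - q*q) - a*(2*p*q) = 0"
        unfolding pq2 qq(2) by (simp add: algebra_simps)
      show ?thesis
        unfolding eq2 using f11 f12 f21 f22 g1 g2 by (simp add: dI)
    qed
    ultimately show ?thesis by blast
  qed
qed

end
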